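(* Let $R$ be a commutative ring with identity. (1) If $R$ is semi-complemented, then $R$ is $\pi$-complemented. (2) If $R$ is $\pi$-complemented, then $R$ is almost complemented.
   Context: $\mathfrak{N}(R)$ is the nilradical and $\mathrm{reg}(R)$ the set of regular elements. An element $a$ is complemented if there is $b$ with $ab=0$ and $a+b\in\mathrm{reg}(R)$. $R$ is semi-complemented if every element of $R\setminus\mathfrak{N}(R)$ is complemented; $R$ is $\pi$-complemented if every element has some power $a^n$ ($n\ge1$) that is complemented; $R$ is almost complemented if $R/\mathfrak{N}(R)$ is a complemented ring (every element of it complemented in it). *)

theory Defs
  imports "HOL-Algebra.QuotRing"
begin

definition nilradical :: "('a, 'b) ring_scheme \<Rightarrow> 'a set" where
  "nilradical R = {a \<in> carrier R. \<exists>n::nat. a [^]\<^bsub>R\<^esub> n = \<zero>\<^bsub>R\<^esub>}"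

definition regular_elem :: "('a, 'b) ring_scheme \<Rightarrow> 'a \<Rightarrow> bool" where
  "regular_elem R a \<longleftrightarrow> a \<in> carrier R \<and>
     (\<forall>x \<in> carrier R. a \<otimes>\<^bsub>R\<^esub> x = \<zero>\<^bsub>R\<^esub> \<longrightarrow> x = \<zero>\<^bsub>R\<^esub>)"

definition complemented_elem :: "('a, 'b) ring_scheme \<Rightarrow> 'a \<Rightarrow> bool" where
  "complemented_elem R a \<longleftrightarrow>
     (\<exists>b \<in> carrier R. a \<otimes>\<^bsub>R\<^esub> b = \<zero>\<^bsub>R\<^esub> \<and> regular_elem R (a \<oplus>\<^bsub>R\<^esub> b))"

definition complemented_ring :: "('a, 'b) ring_scheme \<Rightarrow> bool" where
  "complemented_ring R \<longleftrightarrow> (\<forall>a \<in> carrier R. complemented_elem R a)"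

definition semi_complemented :: "('a, 'b) ring_scheme \<Rightarrow> bool" where
  "semi_complemented R \<longleftrightarrow> (\<forall>a \<in> carrier R - nilradical R. complemented_elem R a)"

definition pi_complemented :: "('a, 'b) ring_scheme \<Rightarrow> bool" where
  "pi_complemented R \<longleftrightarrow>
     (\<forall>a \<in> carrier R. \<exists>n::nat. n \<ge> 1 \<and> complemented_elem R (a [^]\<^bsub>R\<^esub> n))"

definition almost_complemented :: "('a, 'b) ring_scheme \<Rightarrow> bool" where
  "almost_complemented R \<longleftrightarrow> complemented_ring (R Quot nilradical R)"

end

theory Submission
  imports Defs
begin

context cring
begin

lemma pow_zero_ge:
  assumes "x \<in> carrier R" "x [^] (m::nat) = \<zero>" "a \<ge> m"
  shows "x [^] a = \<zero>"
proof -
  have "x [^] a = x [^] m \<otimes> x [^] (a - m)" using assms(1,3) nat_pow_mult[of x m "a-m"] by simp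
  thus ?thesis using assms by simp
qed

lemma nil_add:
  assumes x: "x \<in> carrier R" and y: "y \<in> carrier R"
    and xm: "x [^] (m::nat) = \<zero>" and yk: "y [^] (k::nat) = \<zero>"
  shows "(x \<oplus> y) [^] (m + k) = \<zero>"
proof -
  have main: "\<forall>a b. a + b + n \<ge> m + k \<longrightarrow> (x \<oplus> y) [^] n \<otimes> x [^] a \<otimes> y [^] b = \<zero>" for n
  proof (induction n)
    case 0
    show ?case
    proof (intro allI impI)
      fix a b :: nat assume "a + b + 0 \<ge> m + k"
      hence "a \<ge> m \<or> b \<ge> k" by arith
      thus "(x \<oplus> y) [^] (0::nat) \<otimes> x [^] a \<otimes> y [^] b = \<zero>"
        using pow_zero_ge[OF x xm] pow_zero_ge[OF y yk] x y by auto
    qed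
  next
    case (Suc n)
    show ?case
    proof (intro allI impI)
      fix a b :: nat assume h: "a + b + Suc n \<ge> m + k"
      let ?P = "(x \<oplus> y) [^] n"
      have P: "?P \<in> carrier R" using x y by simp
      have "(x \<oplus> y) [^] Suc n \<otimes> x [^] a \<otimes> y [^] b
          = ?P \<otimes> x [^] Suc a \<otimes> y [^] b \<oplus> ?P \<otimes> x [^] a \<otimes> y [^] Suc b"
      proof -
        have "(x \<oplus> y) [^] Suc n \<otimes> x [^] a \<otimes> y [^] b = ?P \<otimes> (x \<oplus> y) \<otimes> x [^] a \<otimes> y [^] b"
          by simp
        also have "\<dots> = ?P \<otimes> (x \<otimes> x [^] a) \<otimes> y [^] b \<oplus> ?P \<otimes> x [^] a \<otimes> (y \<otimes> y [^] b)"
          using x y P by (simp add: l_distr r_distr m_ac)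
        finally show ?thesis using x y by (simp add: nat_pow_Suc2[symmetric])
      qed
      also have "\<dots> = \<zero>"
      proof -
        have "?P \<otimes> x [^] Suc a \<otimes> y [^] b = \<zero>" by (rule Suc.IH[rule_format]) (use h in arith)
        moreover have "?P \<otimes> x [^] a \<otimes> y [^] Suc b = \<zero>" by (rule Suc.IH[rule_format]) (use h in arith)
        ultimately show ?thesis by (simp del: nat_pow_Suc)
      qed
      finally show "(x \<oplus> y) [^] Suc n \<otimes> x [^] a \<otimes> y [^] b = \<zero>" .
    qed
  qed
  have "(x \<oplus> y) [^] (m+k) \<otimes> x [^] (0::nat) \<otimes> y [^] (0::nat) = \<zero>" using main[of "m+k", rule_format, of 0 0] by simp
  thus ?thesis using x y by simp
qed

lemma nil_mult:
  assumes x: "x \<in> carrier R" and r: "r \<in> carrier R" and xm: "x [^] (m::nat) = \<zero>"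
  shows "(r \<otimes> x) [^] m = \<zero>"
  using nat_pow_distrib[OF r x, of m] xm r by simp

lemma nilradical_ideal: "ideal (nilradical R) R"
proof (rule idealI[OF ring_axioms])
  show "subgroup (nilradical R) (add_monoid R)"
  proof (rule add.subgroupI)
    show "nilradical R \<subseteq> carrier R" unfolding nilradical_def by auto
    have "\<zero> [^] (1::nat) = \<zero>" by simp
    thus "nilradical R \<noteq> {}" unfolding nilradical_def by blast
  next
    fix a assume "a \<in> nilradical R"
    then obtain n::nat where a: "a \<in> carrier R" "a [^] n = \<zero>" unfolding nilradical_def by auto
    have "(\<ominus> \<one> \<otimes> a) [^] n = \<zero>" using nil_mult[OF a(1) _ a(2)] by simp
    moreover have "\<ominus> \<one> \<otimes> a = \<ominus> a" using a by (simp add: l_minus)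
    ultimately show "\<ominus> a \<in> nilradical R" unfolding nilradical_def
      using a by auto
  next
    fix a b assume "a \<in> nilradical R" "b \<in> nilradical R"
    then obtain n k::nat where a: "a \<in> carrier R" "a [^] n = \<zero>" and b: "b \<in> carrier R" "b [^] k = \<zero>"
      unfolding nilradical_def by auto
    show "a \<oplus> b \<in> nilradical R" unfolding nilradical_def
      using nil_add[OF a(1) b(1) a(2) b(2)] a b by auto
  qed
next
  fix a x assume "a \<in> nilradical R" "x \<in> carrier R"
  thus "x \<otimes> a \<in> nilradical R" unfolding nilradical_def using nil_mult by blast
next
  fix a x assume "a \<in> nilradical R" "x \<in> carrier R"
  then obtain n::nat where a: "a \<in> carrier R" "a [^] n = \<zero>" unfolding nilradical_def by auto
  have "(x \<otimes> a) [^] n = \<zero>" by (rule nil_mult) fact+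
  thus "a \<otimes> x \<in> nilradical R" unfolding nilradical_def using a \<open>x \<in> carrier R\<close> m_comm by auto
qed


lemma nil_root:
  assumes x: "x \<in> carrier R" and h: "x [^] (m::nat) \<in> nilradical R"
  shows "x \<in> nilradical R"
proof -
  obtain k::nat where "(x [^] m) [^] k = \<zero>" using h unfolding nilradical_def by auto
  hence "x [^] (m * k) = \<zero>" using x by (simp add: nat_pow_pow)
  thus ?thesis using x unfolding nilradical_def by blast
qed

lemma regular_pow:
  assumes r: "regular_elem R r" shows "regular_elem R (r [^] (n::nat))"
proof (induction n)
  case 0
  show ?case unfolding regular_elem_def by simp
next
  case (Suc n)
  have rc: "r \<in> carrier R" using r unfolding regular_elem_def by blast
  show ?case unfolding regular_elem_def
  proof (intro conjI ballI impI)
    show "r [^] Suc n \<in> carrier R" using rc by simp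
  next
    fix x assume x: "x \<in> carrier R" and e: "r [^] Suc n \<otimes> x = \<zero>"
    have "r \<otimes> (r [^] n \<otimes> x) = r [^] Suc n \<otimes> x" using rc x by (simp add: m_ac)
    hence "r \<otimes> (r [^] n \<otimes> x) = \<zero>" using e by simp
    hence "r [^] n \<otimes> x = \<zero>" using r rc x unfolding regular_elem_def by simp
    thus "x = \<zero>" using Suc.IH x unfolding regular_elem_def by simp
  qed
qed

lemma regular_mod:
  assumes r: "regular_elem R r" and y: "y \<in> carrier R" and h: "r \<otimes> y \<in> nilradical R"
  shows "y \<in> nilradical R"
proof -
  have rc: "r \<in> carrier R" using r unfolding regular_elem_def by blast
  obtain m::nat where "(r \<otimes> y) [^] m = \<zero>" using h unfolding nilradical_def by auto
  hence "r [^] m \<otimes> y [^] m = \<zero>" using nat_pow_distrib[OF rc y] by simp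
  hence "y [^] m = \<zero>" using regular_pow[OF r, of m] y unfolding regular_elem_def by simp
  thus ?thesis using y unfolding nilradical_def by blast
qed

lemma N_cancel:
  assumes "z \<in> carrier R" "z \<oplus> v \<in> nilradical R" "v \<in> nilradical R"
  shows "z \<in> nilradical R"
proof -
  interpret N: ideal "nilradical R" R by (rule nilradical_ideal)
  have vc: "v \<in> carrier R" using assms(3) N.Icarr by blast
  have "(z \<oplus> v) \<oplus> \<ominus> v \<in> nilradical R" using assms by (simp add: N.a_closed N.a_inv_closed)
  moreover have "(z \<oplus> v) \<oplus> \<ominus> v = z" using assms(1) vc by (simp add: a_assoc r_neg)
  ultimately show ?thesis by simp
qed

lemma key:
  assumes a: "a \<in> carrier R" and b: "b \<in> carrier R" and n: "n \<ge> 1"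
    and ab: "a [^] (n::nat) \<otimes> b = \<zero>" and reg: "regular_elem R (a [^] n \<oplus> b)"
    and y: "y \<in> carrier R" and t: "(a \<oplus> b) \<otimes> y \<in> nilradical R"
  shows "y \<in> nilradical R" and "a \<otimes> b \<in> nilradical R"
proof -
  interpret N: ideal "nilradical R" R by (rule nilradical_ideal)
  obtain k where k: "n = Suc k" using n by (cases n) auto
  have "(a \<otimes> b) [^] n = a [^] n \<otimes> b [^] n" using nat_pow_distrib[OF a b] by simp
  also have "\<dots> = (a [^] n \<otimes> b) \<otimes> b [^] k" using a b k by (simp add: m_ac)
  also have "\<dots> = \<zero>" using ab b by simp
  finally have abN: "a \<otimes> b \<in> nilradical R" using a b unfolding nilradical_def by blast
  thus "a \<otimes> b \<in> nilradical R" .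
  have f1: "a \<otimes> ((a \<oplus> b) \<otimes> y) \<in> nilradical R" using t a by (rule N.I_l_closed)
  have f2: "a \<otimes> ((a \<oplus> b) \<otimes> y) = (a \<otimes> a \<otimes> y) \<oplus> (a \<otimes> b) \<otimes> y" using a b y by (simp add: l_distr r_distr m_assoc)
  have f3: "(a \<otimes> b) \<otimes> y \<in> nilradical R" using abN y by (rule N.I_r_closed)
  have aay: "a \<otimes> a \<otimes> y \<in> nilradical R"
    by (rule N_cancel[of _ "(a \<otimes> b) \<otimes> y"]) (use a y f1 f2 f3 in auto)
  have "(a \<otimes> y) [^] (2::nat) = (a \<otimes> a \<otimes> y) \<otimes> y" using a y by (simp add: numeral_2_eq_2 m_ac)
  moreover have "(a \<otimes> a \<otimes> y) \<otimes> y \<in> nilradical R" using aay y by (rule N.I_r_closed)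
  ultimately have ay: "a \<otimes> y \<in> nilradical R" using nil_root[of "a \<otimes> y" 2] a y by simp
  have "(a \<oplus> b) \<otimes> y = b \<otimes> y \<oplus> a \<otimes> y" using a b y by (simp add: l_distr a_comm)
  hence "b \<otimes> y \<oplus> a \<otimes> y \<in> nilradical R" using t by simp
  hence bN: "b \<otimes> y \<in> nilradical R" using N_cancel b y ay by blast
  have e1: "a [^] n \<otimes> y = a [^] k \<otimes> (a \<otimes> y)" using a y k by (simp add: m_assoc)
  have "a [^] k \<otimes> (a \<otimes> y) \<in> nilradical R" using N.I_l_closed[OF ay, of "a [^] k"] a by simp
  hence anN: "a [^] n \<otimes> y \<in> nilradical R" using e1 by simp
  have e2: "(a [^] n \<oplus> b) \<otimes> y = a [^] n \<otimes> y \<oplus> b \<otimes> y" using a b y by (simp add: l_distr)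
  have "a [^] n \<otimes> y \<oplus> b \<otimes> y \<in> nilradical R" using anN bN by (rule N.a_closed)
  hence "(a [^] n \<oplus> b) \<otimes> y \<in> nilradical R" using e2 by simp
  thus "y \<in> nilradical R" using regular_mod[OF reg y] by blast
qed

lemma part1: "semi_complemented R \<Longrightarrow> pi_complemented R"
  unfolding pi_complemented_def
proof (intro ballI)
  fix a assume sc: "semi_complemented R" and a: "a \<in> carrier R"
  show "\<exists>n::nat. n \<ge> 1 \<and> complemented_elem R (a [^] n)"
  proof (cases "a \<in> nilradical R")
    case False
    hence "complemented_elem R a" using sc a unfolding semi_complemented_def by blast
    thus ?thesis using a by (intro exI[of _ "1::nat"]) simp
  next
    case True
    then obtain m::nat where m: "a [^] m = \<zero>" unfolding nilradical_def by auto
    have "a [^] Suc m = \<zero>" using m a by simp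
    moreover have "complemented_elem R \<zero>" unfolding complemented_elem_def regular_elem_def
      by (intro bexI[of _ \<one>]) auto
    ultimately show ?thesis by (intro exI[of _ "Suc m"]) simp
  qed
qed

lemma part2: "pi_complemented R \<Longrightarrow> almost_complemented R"
  unfolding almost_complemented_def complemented_ring_def
proof (intro ballI)
  interpret N: ideal "nilradical R" R by (rule nilradical_ideal)
  let ?N = "nilradical R"
  let ?S = "R Quot ?N"
  have hom: "(+>) ?N \<in> ring_hom R ?S" by (rule N.rcos_ring_hom)
  have zS: "\<zero>\<^bsub>?S\<^esub> = ?N" by (simp add: FactRing_def)
  have iff: "?N +> x = ?N \<longleftrightarrow> x \<in> ?N" if "x \<in> carrier R" for x
    using N.rcos_const_imp_mem[OF that] a_rcos_zero[OF N.is_ideal] by blast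
  have carS: "\<exists>x \<in> carrier R. X = ?N +> x" if "X \<in> carrier ?S" for X
    using that by (simp add: FactRing_def A_RCOSETS_def')
  fix X assume pc: "pi_complemented R" and X: "X \<in> carrier ?S"
  obtain a where a: "a \<in> carrier R" and Xa: "X = ?N +> a" using carS[OF X] by blast
  obtain n::nat where n: "n \<ge> 1" and ca: "complemented_elem R (a [^] n)"
    using pc a unfolding pi_complemented_def by blast
  obtain b where b: "b \<in> carrier R" and ab: "a [^] n \<otimes> b = \<zero>" and reg: "regular_elem R (a [^] n \<oplus> b)"
    using ca unfolding complemented_elem_def by blast
  show "complemented_elem ?S X" unfolding complemented_elem_def
  proof (intro bexI[of _ "?N +> b"] conjI)
    show "?N +> b \<in> carrier ?S" using ring_hom_closed[OF hom b] .
    have "X \<otimes>\<^bsub>?S\<^esub> (?N +> b) = ?N +> (a \<otimes> b)" using Xa ring_hom_mult[OF hom a b] by simp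
    also have "\<dots> = ?N" using iff[of "a \<otimes> b"] a b key(2)[OF a b n ab reg, of \<zero>] by simp
    finally show "X \<otimes>\<^bsub>?S\<^esub> (?N +> b) = \<zero>\<^bsub>?S\<^esub>" using zS by simp
    have sum: "X \<oplus>\<^bsub>?S\<^esub> (?N +> b) = ?N +> (a \<oplus> b)" using Xa ring_hom_add[OF hom a b] by simp
    show "regular_elem ?S (X \<oplus>\<^bsub>?S\<^esub> (?N +> b))" unfolding regular_elem_def
    proof (intro conjI ballI impI)
      show "X \<oplus>\<^bsub>?S\<^esub> (?N +> b) \<in> carrier ?S" using sum ring_hom_closed[OF hom] a b by simp
    next
      fix Y assume Y: "Y \<in> carrier ?S" and e: "(X \<oplus>\<^bsub>?S\<^esub> (?N +> b)) \<otimes>\<^bsub>?S\<^esub> Y = \<zero>\<^bsub>?S\<^esub>"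
      obtain y where y: "y \<in> carrier R" and Yy: "Y = ?N +> y" using carS[OF Y] by blast
      have e': "(?N +> (a \<oplus> b)) \<otimes>\<^bsub>?S\<^esub> (?N +> y) = ?N" using e unfolding sum Yy zS .
      have "?N +> ((a \<oplus> b) \<otimes> y) = ?N" using e' ring_hom_mult[OF hom _ y, of "a \<oplus> b"] a b by simp
      hence "(a \<oplus> b) \<otimes> y \<in> ?N" using iff a b y by simp
      hence "y \<in> ?N" using key(1)[OF a b n ab reg y] by blast
      thus "Y = \<zero>\<^bsub>?S\<^esub>" using iff y Yy zS by simp
    qed
  qed
qed

end

theorem mainTheorem20:
  fixes R :: "('a, 'b) ring_scheme"
  assumes "cring R"
  shows "(semi_complemented R \<longrightarrow> pi_complemented R)
       \<and> (pi_complemented R \<longrightarrow> almost_complemented R)"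
  using cring.part1[OF assms] cring.part2[OF assms] by blast

end
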